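(* For $n>1$ and $k\ge1$, \[ \frac{1}{\varphi(n)^k}\frac{\Phi_n^{(k)}(1)}{\Phi_n(1)}=k!\sum_{(\ast)}\prod_{i=1}^k\frac{(-1)^{i\lambda_i}}{\lambda_i!}\left(\frac{B_i}{i!\cdot i}\right)^{\lambda_i}\frac{J_i(n)^{\lambda_i}}{\varphi(n)^k}+O_k\!\left(\frac{n^{k-1}}{\varphi(n)^k}\right), \] where $\sum_{(\ast)}$ runs over all tuples of non-negative integers $(\lambda_1,\ldots,\lambda_k)$ with $\lambda_1+2\lambda_2+\cdots+k\lambda_k=k$ (and the product over $i$ is taken inside the sum).
   Context: $p$ denotes a prime; $\varphi$ is Euler's totient; $J_i(n)=n^i\prod_{p\mid n}(1-p^{-i})$. $\Phi_n(X)=\prod_{1\le j\le n,\,(j,n)=1}(X-\zeta_n^j)$ is the $n$-th cyclotomic polynomial. Bernoulli numbers: $B_0=1$ and $B_n=-\sum_{k=0}^{n-1}\binom{n}{k}\frac{B_k}{n-k+1}$ (so $B_1=-1/2$). *)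

theory Defs
  imports "HOL-Analysis.Analysis" "HOL-Computational_Algebra.Polynomial" "HOL-Number_Theory.Number_Theory"
begin

definition cyclotomic_poly :: "nat \<Rightarrow> complex poly" where
  "cyclotomic_poly n =
     (\<Prod>j\<in>{j. 1 \<le> j \<and> j \<le> n \<and> coprime j n}. [:- cis (2 * pi * real j / real n), 1:])"

text \<open>Bernoulli numbers, B_0 = 1, B_n = - sum_{k<n} binom(n,k) B_k/(n-k+1) (so B_1 = -1/2).\<close>
fun bernoulli_num :: "nat \<Rightarrow> real" where
  "bernoulli_num n =
     (if n = 0 then 1
      else - (\<Sum>k<n. real (n choose k) * bernoulli_num k / real (n - k + 1)))"

definition jordan_totient :: "nat \<Rightarrow> nat \<Rightarrow> real" where
  "jordan_totient i n = real n ^ i * (\<Prod>p\<in>prime_factors n. (1 - 1 / real p ^ i))"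

definition partition_tuples :: "nat \<Rightarrow> (nat \<Rightarrow> nat) set" where
  "partition_tuples k = {l. (\<forall>i. i \<notin> {1..k} \<longrightarrow> l i = 0) \<and> (\<Sum>i=1..k. i * l i) = k}"

end

theory Submission
  imports Defs "HOL-Computational_Algebra.Polynomial_FPS" "HOL-Computational_Algebra.Fundamental_Theorem_Algebra"
begin

unbundle no vec_syntax
unbundle fps_syntax
declare bernoulli_num.simps[simp del]



lemma bern_rec: "n \<ge> 1 \<Longrightarrow> (\<Sum>j\<le>n. real (Suc n choose j) * bernoulli_num j) = 0"
proof -
  assume n: "n \<ge> 1"
  have B: "bernoulli_num n = - (\<Sum>k<n. real (n choose k) * bernoulli_num k / real (n - k + 1))"
    using n by (subst bernoulli_num.simps) simp
  have c: "real (Suc n choose j) = real (n choose j) * real (Suc n) / real (n - j + 1)" if "j < n" for j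
  proof -
    have "(Suc n - j) * (Suc n choose j) = Suc n * (n choose j)"
      using binomial_absorb_comp[of "Suc n" j] by simp
    then have "real (Suc n - j) * real (Suc n choose j) = real (Suc n) * real (n choose j)"
      by (metis of_nat_mult)
    moreover have "Suc n - j = n - j + 1" using that by simp
    ultimately show ?thesis using that by (simp add: field_simps)
  qed
  have "(\<Sum>j\<le>n. real (Suc n choose j) * bernoulli_num j)
      = (\<Sum>j<n. real (Suc n choose j) * bernoulli_num j) + real (Suc n) * bernoulli_num n"
    by (simp add: lessThan_Suc_atMost[symmetric])
  also have "(\<Sum>j<n. real (Suc n choose j) * bernoulli_num j)
     = real (Suc n) * (\<Sum>j<n. real (n choose j) * bernoulli_num j / real (n - j + 1))"
    unfolding sum_distrib_left by (rule sum.cong) (auto simp: c)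
  also have "\<dots> = - real (Suc n) * bernoulli_num n" using B by (simp add: algebra_simps)
  finally show ?thesis by (simp add: algebra_simps)
qed

definition BF :: "complex \<Rightarrow> complex fps" where
  "BF c = Abs_fps (\<lambda>j. of_real (bernoulli_num j) * c ^ j / fact j)"

lemma bern0: "bernoulli_num 0 = 1" by (subst bernoulli_num.simps) simp
lemma bern1: "bernoulli_num 1 = -1/2" by (subst bernoulli_num.simps) (simp add: bern0)

lemma BF_eq: "BF c * (fps_exp c - 1) = fps_const c * fps_X"
proof (rule fps_ext)
  fix k :: nat
  have "(BF c * (fps_exp c - 1)) $ k = (\<Sum>i=0..k. of_real (bernoulli_num i) * c ^ i / fact i *
          (if k - i = 0 then 0 else c ^ (k - i) / fact (k - i)))"
    by (simp add: fps_mult_nth BF_def) (rule sum.cong; auto)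
  also have "\<dots> = (\<Sum>i<k. of_real (bernoulli_num i) * c ^ i / fact i * (c ^ (k - i) / fact (k - i)))"
    by (rule sum.mono_neutral_cong_right) auto
  also have "\<dots> = c ^ k / fact k * (\<Sum>i<k. of_real (real (k choose i) * bernoulli_num i))"
  proof -
    have "of_real (bernoulli_num i) * c ^ i / fact i * (c ^ (k - i) / fact (k - i))
          = c ^ k / fact k * of_real (real (k choose i) * bernoulli_num i)" if "i < k" for i
    proof -
      have "c ^ i * c ^ (k - i) = c ^ k" using that by (simp flip: power_add)
      moreover have "(of_nat (k choose i) :: complex) = fact k / (fact i * fact (k - i))"
        using binomial_fact[of i k] that by simp
      ultimately show ?thesis by (simp add: field_simps)
    qed
    then show ?thesis by (simp add: sum_distrib_left)
  qed
  also have "\<dots> = (fps_const c * fps_X) $ k"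
  proof (cases k)
    case 0 then show ?thesis by simp
  next
    case (Suc m)
    show ?thesis
    proof (cases m)
      case 0 then show ?thesis using Suc by (simp add: bern0)
    next
      case (Suc m')
      have "(\<Sum>i<k. real (k choose i) * bernoulli_num i) = 0"
        using bern_rec[of m] Suc \<open>k = Suc m\<close> by (simp add: lessThan_Suc_atMost)
      then have "(\<Sum>i<k. of_real (real (k choose i) * bernoulli_num i) :: complex) = 0"
        by (metis of_real_0 of_real_sum)
      then show ?thesis using Suc \<open>k = Suc m\<close> by simp
    qed
  qed
  finally show "(BF c * (fps_exp c - 1)) $ k = (fps_const c * fps_X) $ k" .
qed

lemma bern_odd: assumes "odd j" "j \<ge> 3" shows "bernoulli_num j = 0"
proof -
  define E where "E = fps_exp (1::complex)"
  define E' where "E' = fps_exp (-1::complex)"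
  have EE: "E * E' = 1" unfolding E_def E'_def by (simp flip: fps_exp_add_mult)
  have F1: "BF 1 * (E - 1) = fps_X" using BF_eq[of 1] by (simp add: E_def)
  have F2: "BF (-1) * (E' - 1) = - fps_X" using BF_eq[of "-1"] by (simp add: E'_def)
  have "BF (-1) * (E - 1) = fps_X * E"
  proof -
    have "BF (-1) * (E' - 1) * E = - fps_X * E" using F2 by simp
    moreover have "BF (-1) * (E' - 1) * E = BF (-1) * (E * E') - BF (-1) * E"
      by (simp add: algebra_simps)
    ultimately have "BF (-1) - BF (-1) * E = - fps_X * E" using EE by simp
    then show ?thesis by (simp add: algebra_simps)
  qed
  moreover have "(BF 1 + fps_X) * (E - 1) = fps_X * E" using F1 by (simp add: algebra_simps)
  ultimately have "(BF (-1) - (BF 1 + fps_X)) * (E - 1) = 0" by (simp add: algebra_simps)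
  moreover have "E - 1 \<noteq> 0"
  proof
    assume "E - 1 = 0" then have "(E - 1) $ 1 = 0" by simp
    then show False by (simp add: E_def)
  qed
  ultimately have "BF (-1) = BF 1 + fps_X" by simp
  then have "BF (-1) $ j = (BF 1 + fps_X) $ j" by simp
  then have "of_real (bernoulli_num j) * (-1) ^ j / fact j = (of_real (bernoulli_num j) / fact j :: complex)"
    using assms by (simp add: BF_def)
  then show ?thesis using assms by (simp add: field_simps)
qed



lemma prod_logderiv:
  fixes f :: "'b \<Rightarrow> complex fps"
  assumes "finite A" "\<And>a. a \<in> A \<Longrightarrow> f a $ 0 \<noteq> 0"
  shows "fps_deriv (\<Prod>a\<in>A. f a) = (\<Sum>a\<in>A. fps_deriv (f a) * inverse (f a)) * (\<Prod>a\<in>A. f a)"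
  using assms
proof (induction A rule: finite_induct)
  case empty then show ?case by simp
next
  case (insert x F)
  have inv: "inverse (f x) * f x = 1" using insert.prems by (intro inverse_mult_eq_1) auto
  have "fps_deriv (\<Prod>a\<in>insert x F. f a) = fps_deriv (f x * (\<Prod>a\<in>F. f a))"
    using insert by simp
  also have "\<dots> = fps_deriv (f x) * (\<Prod>a\<in>F. f a) + f x * fps_deriv (\<Prod>a\<in>F. f a)" by simp
  also have "fps_deriv (\<Prod>a\<in>F. f a) = (\<Sum>a\<in>F. fps_deriv (f a) * inverse (f a)) * (\<Prod>a\<in>F. f a)"
    using insert by auto
  finally have "fps_deriv (\<Prod>a\<in>insert x F. f a) =
     fps_deriv (f x) * (inverse (f x) * f x) * (\<Prod>a\<in>F. f a) + f x * ((\<Sum>a\<in>F. fps_deriv (f a) * inverse (f a)) * (\<Prod>a\<in>F. f a))"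
    using inv by simp
  then show ?case using insert by (simp add: algebra_simps)
qed

lemma roots_prod:
  assumes N: "N > 0"
  shows "(\<Prod>l<N. [:- cis (2 * pi * real l / real N), 1:]) = Polynomial.monom (1::complex) N - 1"
proof -
  define p where "p = Polynomial.monom (1::complex) N - 1"
  have pz: "poly p z = z ^ N - 1" for z by (simp add: p_def poly_monom)
  have d1: "degree p \<le> N" unfolding p_def by (intro degree_diff_le) (auto simp: degree_monom_le)
  have d2: "N \<le> degree p" by (rule le_degree) (use N in \<open>simp add: p_def\<close>)
  have deg: "degree p = N" using d1 d2 by simp
  have lc: "lead_coeff p = 1" using deg N by (simp add: p_def)
  have rsq: "rsquarefree p"
    unfolding rsquarefree_roots
  proof (intro allI notI)
    fix a assume a: "poly p a = 0 \<and> poly (pderiv p) a = 0"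
    have "poly (pderiv p) a = of_nat N * a ^ (N - 1)"
      by (simp add: p_def pderiv_monom poly_monom pderiv_diff)
    with a N have "a = 0" by simp
    with a N pz show False by (cases N) auto
  qed
  have "Polynomial.smult (lead_coeff p) (\<Prod>z|poly p z = 0. [:-z, 1:]) = p"
    by (rule complex_poly_decompose_rsquarefree[OF rsq])
  then have "(\<Prod>z|z ^ N = 1. [:-z, 1:]) = p" using lc pz by simp
  moreover have "(\<Prod>l<N. [:- cis (2 * pi * real l / real N), 1:]) = (\<Prod>z|z ^ N = 1. [:-z, 1:])"
    by (rule prod.reindex_bij_betw[OF Complex.bij_betw_roots_unity[OF N]])
  ultimately show ?thesis by (simp add: p_def)
qed

definition ev :: "complex poly \<Rightarrow> complex fps" where
  "ev p = fps_of_poly (pcompose p [:1,1:]) oo (fps_exp 1 - 1)"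

lemma Y0: "(fps_exp (1::complex) - 1) $ 0 = 0" by simp

lemma ev_mult: "ev (p * q) = ev p * ev q"
  unfolding ev_def by (simp add: pcompose_mult fps_of_poly_mult fps_compose_mult_distrib[OF Y0])

lemma ev_prod: "ev (\<Prod>a\<in>A. f a) = (\<Prod>a\<in>A. ev (f a))"
  unfolding ev_def by (simp add: pcompose_prod fps_of_poly_prod fps_compose_prod_distrib[OF Y0])

lemma ev_diff: "ev (p - q) = ev p - ev q"
  unfolding ev_def by (simp add: pcompose_diff fps_of_poly_diff fps_compose_sub_distrib)

lemma ev_1: "ev 1 = 1"
  unfolding ev_def by (simp add: pcompose_1)

lemma ev_lin: "ev [:-c, 1:] = fps_exp 1 - fps_const c"
proof -
  have "pcompose [:-c, 1:] [:1,1:] = [:1 - c, 1:]" by (simp add: pcompose_pCons)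
  then have h2: "fps_of_poly (pcompose [:-c, 1:] [:1,1:]) = fps_const (1 - c) + fps_X"
    by (simp add: fps_of_poly_linear add.commute)
  have "ev [:-c, 1:] = (fps_const (1 - c) + fps_X) oo (fps_exp 1 - 1)"
    by (simp only: ev_def h2)
  also have "\<dots> = fps_const (1 - c) + (fps_exp 1 - 1)" by (simp add: fps_compose_add_distrib)
  also have "fps_const (1 - c) = 1 - fps_const c" by (metis fps_const_1_eq_1 fps_const_sub)
  finally show ?thesis by simp
qed

lemma ev_power: "ev (p ^ n) = ev p ^ n"
  by (induction n) (simp_all add: ev_1 ev_mult)

lemma ev_monom: "ev (Polynomial.monom 1 N) = fps_exp (of_nat N)"
proof -
  have "Polynomial.monom (1::complex) N = [:-0, 1:] ^ N" by (simp add: monom_altdef)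
  then have "ev (Polynomial.monom 1 N) = (fps_exp 1 - fps_const 0) ^ N" by (simp only: ev_power ev_lin)
  then show ?thesis by (simp add: fps_exp_power_mult)
qed

lemma ev_nth: "ev p $ k = (\<Sum>i=0..k. Polynomial.coeff (pcompose p [:1,1:]) i * ((fps_exp 1 - 1) ^ i) $ k)"
  unfolding ev_def by (simp add: fps_compose_nth)

lemma Ypow_nth: "((fps_exp (1::complex) - 1) ^ i) $ k = (if k < i then 0 else if k = i then 1 else ((fps_exp (1::complex) - 1) ^ i) $ k)"
proof -
  have "k < i \<Longrightarrow> ((fps_exp (1::complex) - 1) ^ i) $ k = 0"
    using startsby_zero_power_prefix[OF Y0] by blast
  moreover have "((fps_exp (1::complex) - 1) ^ k) $ k = 1"
    using startsby_zero_power_nth_same[OF Y0, of k] by simp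
  ultimately show ?thesis by auto
qed



definition rt :: "nat \<Rightarrow> nat \<Rightarrow> complex" where
  "rt N l = cis (2 * pi * real l / real N)"

definition gam :: "complex \<Rightarrow> nat \<Rightarrow> complex" where
  "gam c i = (fps_exp 1 * inverse (fps_exp 1 - fps_const c)) $ i"

lemma alg: fixes X E F Q G Y c B1 BN :: "'a::comm_ring_1"
  assumes h1: "Q*(E-1) = F-1" and h2: "G*Q*(E-1) + Q*E = c*F" and h4: "BN*(F-1) = c*X"
    and h5: "B1*(E-1) = X" and h6: "X*Y = BN - B1"
  shows "X*(E-1)*(F-1)*Q*(G-(c-1)-Y) = 0"
proof -
  have e1: "G*Q*(E-1) = c*F - Q*E" using h2 by (simp add: algebra_simps)
  have "X*(E-1)*(F-1)*Q*(G-(c-1)-Y) = X*(F-1)*(G*Q*(E-1)) - (c-1)*X*(F-1)*(Q*(E-1)) - (F-1)*(Q*(E-1))*(X*Y)"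
    by (simp add: algebra_simps)
  also have "\<dots> = X*(F-1)*(c*F - Q*E) - (c-1)*X*(F-1)*(F-1) - (F-1)*(F-1)*(BN - B1)"
    by (simp only: e1 h1 h6)
  also have "(F-1)*(F-1)*(BN - B1) = (F-1)*(BN*(F-1)) - (F-1)*(B1*(Q*(E-1)))"
    unfolding h1 by (simp add: algebra_simps)
  also have "\<dots> = (F-1)*(c*X) - (F-1)*Q*X"
  proof -
    have "B1*(Q*(E-1)) = Q*X" by (metis h5 mult.left_commute)
    then show ?thesis unfolding h4 by (simp add: algebra_simps)
  qed
  also have "X*(F-1)*(c*F - Q*E) - (c-1)*X*(F-1)*(F-1) - ((F-1)*(c*X) - (F-1)*Q*X) = X*(F-1)*((F - 1) - Q*(E-1))"
    by (simp add: algebra_simps)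
  also have "\<dots> = 0" using h1 by simp
  finally show ?thesis .
qed

lemma prod_nth0: "(\<Prod>a\<in>A. f a) $ 0 = (\<Prod>a\<in>A. f a $ 0 :: complex)"
  by (induction A rule: infinite_finite_induct) auto

lemma rt_ne1: assumes "0 < l" "l < N" shows "rt N l \<noteq> 1"
proof
  assume h: "rt N l = 1"
  have N: "N > 0" using assms by simp
  have inj: "inj_on (\<lambda>k. cis (2 * pi * real k / real N)) {..<N}"
    using Complex.bij_betw_roots_unity[OF N] by (simp add: bij_betw_def)
  have "cis (2 * pi * real l / real N) = cis (2 * pi * real 0 / real N)"
    using h by (simp add: rt_def)
  then have "l = 0" using inj_onD[OF inj] assms by auto
  then show False using assms by simp
qed

lemma rt_0: "rt N 0 = 1" by (simp add: rt_def)

lemma GN_formula: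
  assumes N: "N > 0"
  shows "(\<Sum>l\<in>{1..<N}. gam (rt N l) i) =
     (if i = 0 then of_nat N - 1 else 0) + of_real (bernoulli_num (Suc i)) * (of_nat N ^ Suc i - 1) / fact (Suc i)"
proof -
  define E where "E = fps_exp (1::complex)"
  define F where "F = fps_exp (of_nat N :: complex)"
  define Q where "Q = (\<Prod>l\<in>{1..<N}. E - fps_const (rt N l))"
  define G where "G = (\<Sum>l\<in>{1..<N}. E * inverse (E - fps_const (rt N l)))"
  define Y where "Y = Abs_fps (\<lambda>i. of_real (bernoulli_num (Suc i)) * (of_nat N ^ Suc i - 1) / fact (Suc i) :: complex)"
  define c where "c = fps_const (of_nat N :: complex)"
  have nz: "(E - fps_const (rt N l)) $ 0 \<noteq> 0" if "l \<in> {1..<N}" for l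
    using rt_ne1[of l N] that by (simp add: E_def)
  have H1: "Q * (E - 1) = F - 1"
  proof -
    have "ev (\<Prod>l<N. [:- rt N l, 1:]) = ev (Polynomial.monom 1 N - 1)"
      using roots_prod[OF N] by (simp add: rt_def)
    then have "(\<Prod>l<N. E - fps_const (rt N l)) = F - 1"
      by (simp add: ev_prod ev_lin ev_diff ev_monom ev_1 E_def F_def)
    moreover have "{..<N} = insert 0 {1..<N}" using N by auto
    ultimately show ?thesis using rt_0 by (simp add: Q_def mult.commute)
  qed
  have H3: "fps_deriv Q = G * Q"
  proof -
    have "fps_deriv Q = (\<Sum>l\<in>{1..<N}. fps_deriv (E - fps_const (rt N l)) * inverse (E - fps_const (rt N l))) * Q"
      unfolding Q_def apply (rule prod_logderiv) apply simp using nz by blast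
    then show ?thesis by (simp add: G_def E_def)
  qed
  have H2: "fps_deriv Q * (E - 1) + Q * E = c * F"
  proof -
    have "fps_deriv (Q * (E - 1)) = fps_deriv (F - 1)" using H1 by simp
    then show ?thesis by (simp add: E_def F_def c_def add.commute)
  qed
  have H4: "BF (of_nat N) * (F - 1) = c * fps_X" using BF_eq[of "of_nat N"] by (simp add: F_def c_def)
  have H5: "BF 1 * (E - 1) = fps_X" using BF_eq[of 1] by (simp add: E_def)
  have H6: "fps_X * Y = BF (of_nat N) - BF 1"
  proof (rule fps_ext)
    fix n show "(fps_X * Y) $ n = (BF (of_nat N) - BF 1) $ n"
    proof (cases n)
      case 0 then show ?thesis by (simp add: BF_def)
    next
      case (Suc m) then show ?thesis
        by (simp add: Y_def BF_def right_diff_distrib diff_divide_distrib del: fact_Suc)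
    qed
  qed
  have key: "fps_X * (E - 1) * (F - 1) * Q * (G - (c - 1) - Y) = 0"
    by (rule alg[OF H1 _ H4 H5 H6]) (use H2 H3 in simp)
  have "fps_X \<noteq> (0::complex fps)" by simp
  moreover have "E - 1 \<noteq> 0"
  proof
    assume "E - 1 = 0" then have "(E - 1) $ 1 = 0" by simp
    then show False by (simp add: E_def)
  qed
  moreover have "F - 1 \<noteq> 0"
  proof
    assume "F - 1 = 0" then have "(F - 1) $ 1 = 0" by simp
    then show False using N by (simp add: F_def)
  qed
  moreover have "Q \<noteq> 0"
  proof
    assume "Q = 0" then have "Q $ 0 = 0" by simp
    then show False unfolding Q_def using nz by (simp add: prod_nth0)
  qed
  ultimately have "G - (c - 1) = Y" using key by simp
  then have "G = (c - 1) + Y" by (simp add: algebra_simps)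
  then have "G $ i = ((c - 1) + Y) $ i" by simp
  moreover have "G $ i = (\<Sum>l\<in>{1..<N}. gam (rt N l) i)"
    by (simp add: G_def gam_def fps_sum_nth E_def)
  ultimately show ?thesis by (simp add: Y_def c_def)
qed



lemma alt_sum:
  assumes "finite T"
  shows "(\<Sum>S\<in>Pow T. (-1::'a::comm_ring_1) ^ card S) = (if T = {} then 1 else 0)"
proof -
  have "(\<Prod>x\<in>T. (1::'a) - 1) = (\<Sum>X\<in>Pow T. (-1) ^ card X * (\<Prod>x\<in>X. 1) * (\<Prod>x\<in>T-X. 1))"
    by (rule prod_diff_conv_sum[OF assms])
  then have h: "(\<Sum>S\<in>Pow T. (-1::'a) ^ card S) = 0 ^ card T" by simp
  show ?thesis
  proof (cases "T = {}")
    case True then show ?thesis by simp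
  next
    case False then have "card T > 0" using assms by (simp add: card_gt_0_iff)
    then show ?thesis using h False by (simp add: zero_power)
  qed
qed

lemma prod_primes_dvd:
  fixes j :: nat
  assumes "finite S" "\<forall>p\<in>S. prime p \<and> p dvd j"
  shows "(\<Prod>p\<in>S. p) dvd j"
  using assms
proof (induction S rule: finite_induct)
  case empty then show ?case by simp
next
  case (insert q S)
  have "\<not> q dvd (\<Prod>p\<in>S. p)"
  proof
    assume "q dvd (\<Prod>p\<in>S. p)"
    then obtain x where "x \<in> S" "q dvd x" using insert prime_dvd_prod_iff[of S q "\<lambda>p. p"] by auto
    then have "q = x" using insert by (simp add: primes_dvd_imp_eq)
    then show False using insert \<open>x \<in> S\<close> by simp
  qed
  then have "coprime q (\<Prod>p\<in>S. p)" using insert by (intro prime_imp_coprime) auto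
  then show ?case using insert by (simp add: divides_mult)
qed

lemma coprime_iff_pf:
  fixes j n :: nat
  assumes "n > 0"
  shows "coprime j n \<longleftrightarrow> (\<forall>p\<in>prime_factors n. \<not> p dvd j)"
proof
  assume c: "coprime j n"
  show "\<forall>p\<in>prime_factors n. \<not> p dvd j"
  proof (intro ballI notI)
    fix p assume p: "p \<in> prime_factors n" "p dvd j"
    then have "is_unit p" using c coprime_common_divisor[of j n p] by auto
    then show False using p by (auto dest: in_prime_factors_imp_prime)
  qed
next
  assume h: "\<forall>p\<in>prime_factors n. \<not> p dvd j"
  show "coprime j n"
  proof (rule ccontr)
    assume "\<not> coprime j n"
    then obtain c where c: "c dvd j" "c dvd n" "\<not> is_unit c" by (rule not_coprimeE)
    then have "c \<noteq> 1" by auto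
    then obtain p where p: "prime p" "p dvd c" using prime_factor_nat by blast
    then have "p \<in> prime_factors n" using c assms by (auto simp: prime_factors_dvd intro: dvd_trans)
    moreover have "p dvd j" using p c by (auto intro: dvd_trans)
    ultimately show False using h by blast
  qed
qed

lemma dvd_all_iff:
  fixes j n :: nat
  assumes "S \<subseteq> prime_factors n"
  shows "(\<forall>p\<in>S. p dvd j) \<longleftrightarrow> (\<Prod>p\<in>S. p) dvd j"
proof -
  have fin: "finite S" using assms finite_subset by blast
  show ?thesis
  proof
    assume "\<forall>p\<in>S. p dvd j" then show "(\<Prod>p\<in>S. p) dvd j"
      using assms fin by (intro prod_primes_dvd) auto
  next
    assume h: "(\<Prod>p\<in>S. p) dvd j"
    show "\<forall>p\<in>S. p dvd j"
    proof
      fix p assume "p \<in> S" then have "p dvd (\<Prod>p\<in>S. p)" using dvd_prodI[OF fin, of p "\<lambda>x. x"] by simp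
      then show "p dvd j" using h by (rule dvd_trans)
    qed
  qed
qed

lemma prodS_dvd: "(S::nat set) \<subseteq> prime_factors n \<Longrightarrow> n > 0 \<Longrightarrow> (\<Prod>p\<in>S. p) dvd n"
  using dvd_all_iff[of S n n] by auto

lemma prodS_pos: "(S::nat set) \<subseteq> prime_factors n \<Longrightarrow> (\<Prod>p\<in>S. p) > (0::nat)"
  by (metis in_prime_factors_imp_prime not_gr0 prime_gt_0_nat prod_pos subset_iff)

lemma incl_excl:
  fixes f :: "nat \<Rightarrow> complex" and n :: nat
  assumes "n > 0"
  shows "(\<Sum>j\<in>{j. j < n \<and> coprime j n}. f j) =
     (\<Sum>S\<in>Pow (prime_factors n). (-1) ^ card S * (\<Sum>j\<in>{j. j < n \<and> (\<Prod>p\<in>S. p) dvd j}. f j))"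
proof -
  define P where "P = prime_factors n"
  have finP: "finite P" by (simp add: P_def)
  have ind: "(if coprime j n then 1 else 0) = (\<Sum>S\<in>{S\<in>Pow P. (\<Prod>p\<in>S. p) dvd j}. (-1::complex) ^ card S)" for j
  proof -
    have "{S\<in>Pow P. (\<Prod>p\<in>S. p) dvd j} = Pow {p\<in>P. p dvd j}"
      using dvd_all_iff[of _ n j] by (auto simp: P_def)
    moreover have "finite {p\<in>P. p dvd j}" using finP by simp
    ultimately show ?thesis using alt_sum[of "{p\<in>P. p dvd j}"] coprime_iff_pf[OF assms, of j]
      by (auto simp: P_def)
  qed
  have "(\<Sum>j\<in>{j. j < n \<and> coprime j n}. f j) = (\<Sum>j<n. (if coprime j n then 1 else 0) * f j)"
    by (rule sum.mono_neutral_cong_left) auto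
  also have "\<dots> = (\<Sum>j<n. \<Sum>S\<in>{S\<in>Pow P. (\<Prod>p\<in>S. p) dvd j}. (-1::complex) ^ card S * f j)"
    by (simp add: ind sum_distrib_right)
  also have "\<dots> = (\<Sum>j<n. \<Sum>S\<in>Pow P. if (\<Prod>p\<in>S. p) dvd j then (-1::complex) ^ card S * f j else 0)"
    apply (rule sum.cong[OF refl]) apply (subst sum.inter_filter[symmetric]) apply (simp add: finP)
    apply (rule sum.cong) apply auto done
  also have "\<dots> = (\<Sum>S\<in>Pow P. \<Sum>j<n. if (\<Prod>p\<in>S. p) dvd j then (-1::complex) ^ card S * f j else 0)"
    by (rule sum.swap)
  also have "\<dots> = (\<Sum>S\<in>Pow P. (-1) ^ card S * (\<Sum>j\<in>{j. j < n \<and> (\<Prod>p\<in>S. p) dvd j}. f j))"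
  proof (rule sum.cong[OF refl])
    fix S
    have "(\<Sum>j<n. if (\<Prod>p\<in>S. p) dvd j then (-1::complex) ^ card S * f j else 0)
        = (\<Sum>j\<in>{j\<in>{..<n}. (\<Prod>p\<in>S. p) dvd j}. (-1::complex) ^ card S * f j)"
      apply (subst sum.inter_filter[symmetric]) apply simp apply (rule sum.cong) apply auto done
    also have "\<dots> = (-1) ^ card S * (\<Sum>j\<in>{j. j < n \<and> (\<Prod>p\<in>S. p) dvd j}. f j)"
      by (simp add: sum_distrib_left)
    finally show "(\<Sum>j<n. if (\<Prod>p\<in>S. p) dvd j then (-1::complex) ^ card S * f j else 0) =
        (-1) ^ card S * (\<Sum>j\<in>{j. j < n \<and> (\<Prod>p\<in>S. p) dvd j}. f j)" .
  qed
  finally show ?thesis by (simp add: P_def)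
qed

lemma multiples_sum:
  fixes f :: "nat \<Rightarrow> complex"
  assumes "m > 0" "m dvd n"
  shows "(\<Sum>j\<in>{j. j < n \<and> m dvd j}. f j) = (\<Sum>l<n div m. f (m * l))"
proof -
  have "{j. j < n \<and> m dvd j} = (\<lambda>l. m * l) ` {..<n div m}"
  proof (rule Set.set_eqI, rule iffI)
    fix j assume "j \<in> {j. j < n \<and> m dvd j}"
    then obtain l where "j = m * l" "m * l < n" by auto
    moreover then have "l < n div m" using assms
      by (metis dvd_mult_div_cancel mult_less_cancel1)
    ultimately show "j \<in> (\<lambda>l. m * l) ` {..<n div m}" by auto
  next
    fix j assume "j \<in> (\<lambda>l. m * l) ` {..<n div m}"
    then obtain l where "j = m * l" "l < n div m" by auto
    then show "j \<in> {j. j < n \<and> m dvd j}" using assms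
      by (metis (mono_tags, lifting) dvd_mult_div_cancel dvd_triv_left mem_Collect_eq mult_less_cancel1)
  qed
  moreover have "inj_on (\<lambda>l. m * l) {..<n div m}" using assms by (auto simp: inj_on_def)
  ultimately show ?thesis by (simp add: sum.reindex)
qed

lemma jordan_IE:
  assumes "n > 0"
  shows "jordan_totient r n = (\<Sum>S\<in>Pow (prime_factors n). (-1) ^ card S * real (n div (\<Prod>p\<in>S. p)) ^ r)"
proof -
  define P where "P = prime_factors n"
  have "(\<Prod>p\<in>P. 1 - 1 / real p ^ r) = (\<Sum>X\<in>Pow P. (-1) ^ card X * (\<Prod>p\<in>X. 1 / real p ^ r) * (\<Prod>x\<in>P-X. 1))"
    by (rule prod_diff_conv_sum) (simp add: P_def)
  then have "jordan_totient r n = (\<Sum>X\<in>Pow P. (-1) ^ card X * (real n ^ r * (\<Prod>p\<in>X. 1 / real p ^ r)))"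
    by (simp add: jordan_totient_def P_def sum_distrib_left mult_ac)
  also have "\<dots> = (\<Sum>X\<in>Pow P. (-1) ^ card X * real (n div (\<Prod>p\<in>X. p)) ^ r)"
  proof (rule sum.cong[OF refl])
    fix X assume X: "X \<in> Pow P"
    have "real (n div (\<Prod>p\<in>X. p)) = real n / (\<Prod>p\<in>X. real p)"
      using prodS_dvd[of X n] X assms by (simp add: P_def real_of_nat_div)
    then have "real (n div (\<Prod>p\<in>X. p)) ^ r = real n ^ r * (\<Prod>p\<in>X. 1 / real p ^ r)"
      by (simp add: power_divide prod_power_distrib prod_dividef)
    then show "(-1) ^ card X * (real n ^ r * (\<Prod>p\<in>X. 1 / real p ^ r)) = (-1) ^ card X * real (n div (\<Prod>p\<in>X. p)) ^ r"
      by simp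
  qed
  finally show ?thesis by (simp add: P_def)
qed



lemma g_formula:
  assumes n: "n > 1"
  shows "(\<Sum>j\<in>{j. 1 \<le> j \<and> j \<le> n \<and> coprime j n}. gam (cis (2 * pi * real j / real n)) i) =
    (if i = 0 then of_real (jordan_totient 1 n) else 0) +
    of_real (bernoulli_num (Suc i)) * of_real (jordan_totient (Suc i) n) / fact (Suc i)"
proof -
  define f where "f j = gam (cis (2 * pi * real j / real n)) i" for j
  define P where "P = prime_factors n"
  define w where "w S = ((-1::complex) ^ card S)" for S :: "nat set"
  define M where "M S = n div (\<Prod>p\<in>S. p)" for S :: "nat set"
  define a where "a = (if i = 0 then 1 else (0::complex))"
  define b where "b = of_real (bernoulli_num (Suc i)) / (fact (Suc i) :: complex)"
  define \<kappa> where "\<kappa> = gam 1 i"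
  have n0: "n > 0" using n by simp
  have finP: "finite P" by (simp add: P_def)
  have Pne: "P \<noteq> {}"
  proof -
    obtain p where "prime p" "p dvd n" using prime_factor_nat[of n] n by auto
    then have "p \<in> P" using n0 by (simp add: P_def prime_factors_dvd)
    then show ?thesis by auto
  qed
  have set_eq: "{j. 1 \<le> j \<and> j \<le> n \<and> coprime j n} = {j. j < n \<and> coprime j n}"
  proof (rule Set.set_eqI)
    fix j
    have "coprime 0 n \<longleftrightarrow> False" using n by simp
    moreover have "coprime n n \<longleftrightarrow> False" using n by simp
    ultimately show "j \<in> {j. 1 \<le> j \<and> j \<le> n \<and> coprime j n} \<longleftrightarrow> j \<in> {j. j < n \<and> coprime j n}"
      by (cases "j = 0"; cases "j = n") auto
  qed
  have inner: "(\<Sum>j\<in>{j. j < n \<and> (\<Prod>p\<in>S. p) dvd j}. f j) =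
       \<kappa> + a * (of_nat (M S) - 1) + b * (of_nat (M S) ^ Suc i - 1)" if S: "S \<in> Pow P" for S
  proof -
    define m where "m = (\<Prod>p\<in>S. p)"
    have m0: "m > 0" using prodS_pos[of S n] S by (simp add: m_def P_def)
    have mdvd: "m dvd n" using prodS_dvd[of S n] S n0 by (simp add: m_def P_def)
    define N where "N = n div m"
    have nmN: "n = m * N" using mdvd by (simp add: N_def)
    have N0: "N > 0" using nmN n0 by (cases N) auto
    have "(\<Sum>j\<in>{j. j < n \<and> m dvd j}. f j) = (\<Sum>l<N. f (m * l))"
      unfolding N_def by (rule multiples_sum[OF m0 mdvd])
    also have "\<dots> = (\<Sum>l<N. gam (rt N l) i)"
    proof (rule sum.cong[OF refl])
      fix l
      have "2 * pi * real (m * l) / real n = 2 * pi * real l / real N"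
        using m0 N0 by (simp add: nmN field_simps)
      then show "f (m * l) = gam (rt N l) i" by (simp add: f_def rt_def)
    qed
    also have "{..<N} = insert 0 {1..<N}" using N0 by auto
    also have "(\<Sum>l\<in>insert 0 {1..<N}. gam (rt N l) i) = gam (rt N 0) i + (\<Sum>l\<in>{1..<N}. gam (rt N l) i)"
      by simp
    also have "\<dots> = \<kappa> + a * (of_nat N - 1) + b * (of_nat N ^ Suc i - 1)"
      using GN_formula[OF N0, of i] by (simp add: rt_0 \<kappa>_def a_def b_def)
    finally show ?thesis by (simp add: m_def M_def N_def)
  qed
  have JI: "of_real (jordan_totient r n) = (\<Sum>S\<in>Pow P. w S * of_nat (M S) ^ r)" for r
    using jordan_IE[OF n0, of r] by (simp add: P_def w_def M_def)
  have W0: "(\<Sum>S\<in>Pow P. w S) = 0" using alt_sum[OF finP] Pne by (simp add: w_def)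
  have "(\<Sum>j\<in>{j. 1 \<le> j \<and> j \<le> n \<and> coprime j n}. f j) =
      (\<Sum>S\<in>Pow P. w S * (\<kappa> + a * (of_nat (M S) - 1) + b * (of_nat (M S) ^ Suc i - 1)))"
    unfolding set_eq incl_excl[OF n0] by (rule sum.cong) (auto simp: inner P_def w_def)
  also have "\<dots> = (\<Sum>S\<in>Pow P. (\<kappa> - a - b) * w S + a * (w S * of_nat (M S) ^ 1) + b * (w S * of_nat (M S) ^ Suc i))"
    by (rule sum.cong) (auto simp: algebra_simps)
  also have "\<dots> = (\<kappa> - a - b) * (\<Sum>S\<in>Pow P. w S) + a * (\<Sum>S\<in>Pow P. w S * of_nat (M S) ^ 1)
        + b * (\<Sum>S\<in>Pow P. w S * of_nat (M S) ^ Suc i)"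
    by (simp add: sum.distrib sum_distrib_left)
  also have "\<dots> = a * of_real (jordan_totient 1 n) + b * of_real (jordan_totient (Suc i) n)"
    by (simp only: W0 JI) simp
  finally show ?thesis by (simp add: f_def a_def b_def)
qed



lemma pt_bound:
  assumes "l \<in> partition_tuples k" "i \<in> {1..k}"
  shows "i * l i \<le> k"
proof -
  have "i * l i \<le> (\<Sum>j=1..k. j * l j)" using assms(2) by (intro member_le_sum) auto
  then show ?thesis using assms(1) by (simp add: partition_tuples_def)
qed

lemma pt_fin: "finite (partition_tuples k)"
proof -
  have "partition_tuples k \<subseteq> {f. \<forall>x. (x \<in> {1..k} \<longrightarrow> f x \<in> {0..k}) \<and> (x \<notin> {1..k} \<longrightarrow> f x = 0)}"
  proof safe
    fix l x assume l: "l \<in> partition_tuples k" and x: "x \<in> {1..k}"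
    have "x * l x \<le> k" by (rule pt_bound[OF l x])
    moreover have "l x \<le> x * l x" using x by (cases x) auto
    ultimately have "l x \<le> k" by linarith
    then show "l x \<in> {0..k}" by simp
  qed (auto simp: partition_tuples_def)
  moreover have "finite {f. \<forall>x. (x \<in> {1..k} \<longrightarrow> f x \<in> {0..k}) \<and> (x \<notin> {1..k} \<longrightarrow> f x = (0::nat))}"
    by (intro finite_set_of_finite_funs) auto
  ultimately show ?thesis by (rule finite_subset)
qed

definition wt :: "(nat \<Rightarrow> real) \<Rightarrow> nat \<Rightarrow> (nat \<Rightarrow> nat) \<Rightarrow> real" where
  "wt y K l = (\<Prod>j=1..K. y j ^ l j / fact (l j))"

definition pw :: "(nat \<Rightarrow> real) \<Rightarrow> nat \<Rightarrow> real" where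
  "pw y k = (\<Sum>l\<in>partition_tuples k. wt y k l)"

lemma wt_ext:
  fixes K K' :: nat
  assumes "\<forall>i. i \<notin> {1..K} \<longrightarrow> l i = 0" "K \<le> K'"
  shows "wt y K' l = wt y K l"
  unfolding wt_def using assms by (intro prod.mono_neutral_right) auto

lemma wsum_ext:
  fixes l :: "nat \<Rightarrow> nat" and K K' :: nat
  assumes "\<forall>i. i \<notin> {1..K} \<longrightarrow> l i = 0" "K \<le> K'"
  shows "(\<Sum>i=1..K'. i * l i) = (\<Sum>i=1..K. i * l i)"
  using assms by (intro sum.mono_neutral_right) auto

lemma wt_split:
  fixes K :: nat
  assumes "i \<in> {1..K}"
  shows "wt y K l = y i ^ l i / fact (l i) * (\<Prod>j\<in>{1..K}-{i}. y j ^ l j / fact (l j))"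
  unfolding wt_def using assms by (subst prod.remove[of _ i]) auto

lemma wsum_split:
  fixes l :: "nat \<Rightarrow> nat" and K :: nat
  assumes "i \<in> {1..K}"
  shows "(\<Sum>j=1..K. j * l j) = i * l i + (\<Sum>j\<in>{1..K}-{i}. j * l j)"
  using assms by (subst sum.remove[of _ i]) auto

lemma pt0: "partition_tuples 0 = {\<lambda>_. 0}"
  by (auto simp: partition_tuples_def)

lemma pw0: "pw y 0 = 1"
  by (simp add: pw_def pt0 wt_def)

lemma pw_inner:
  assumes i: "i \<in> {1..k}"
  shows "(\<Sum>l\<in>partition_tuples k. real (l i) * wt y k l) = y i * pw y (k - i)"
proof -
  define T where "T = partition_tuples k"
  define S where "S = {l\<in>T. l i > 0}"
  define T' where "T' = partition_tuples (k - i)"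
  have "(\<Sum>l\<in>T. real (l i) * wt y k l) = (\<Sum>l\<in>S. real (l i) * wt y k l)"
    unfolding S_def by (rule sum.mono_neutral_right) (auto simp: T_def pt_fin)
  also have "\<dots> = (\<Sum>m\<in>T'. y i * wt y k m)"
  proof (rule sum.reindex_bij_witness[where i = "\<lambda>m. m(i := m i + 1)" and j = "\<lambda>l. l(i := l i - 1)"])
    fix l assume l: "l \<in> S"
    then show "(l(i := l i - 1))(i := (l(i := l i - 1)) i + 1) = l" by (auto simp: S_def)
    have lT: "(\<forall>j. j \<notin> {1..k} \<longrightarrow> l j = 0)" "(\<Sum>j=1..k. j * l j) = k" "l i > 0"
      using l by (auto simp: S_def T_def partition_tuples_def)
    define m where "m = l(i := l i - 1)"
    have rest: "(\<Sum>j\<in>{1..k}-{i}. j * m j) = (\<Sum>j\<in>{1..k}-{i}. j * l j)"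
      by (rule sum.cong) (auto simp: m_def)
    have "(\<Sum>j=1..k. j * m j) = i * m i + (\<Sum>j\<in>{1..k}-{i}. j * l j)"
      using wsum_split[OF i, of m] rest by simp
    moreover have "k = i * l i + (\<Sum>j\<in>{1..k}-{i}. j * l j)" using wsum_split[OF i, of l] lT by simp
    moreover have "i * l i = i * m i + i" using lT by (cases "l i") (auto simp: m_def)
    ultimately have msum: "(\<Sum>j=1..k. j * m j) = k - i" by linarith
    have msupp: "\<forall>j. j \<notin> {1..k - i} \<longrightarrow> m j = 0"
    proof (intro allI impI)
      fix j assume j: "j \<notin> {1..k - i}"
      show "m j = 0"
      proof (cases "j \<in> {1..k}")
        case False then show ?thesis using lT by (auto simp: m_def)
      next
        case True
        with j have "j > k - i" by auto
        have "j * m j \<le> (\<Sum>j=1..k. j * m j)" using True by (intro member_le_sum) auto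
        then have "j * m j < j" using msum \<open>j > k - i\<close> by linarith
        then show ?thesis by (cases "m j") auto
      qed
    qed
    have "(\<Sum>j=1..k - i. j * m j) = k - i"
      using msum wsum_ext[OF msupp, of k] by simp
    then show "l(i := l i - 1) \<in> T'" using msupp by (simp add: T'_def partition_tuples_def m_def)
    show "y i * wt y k (l(i := l i - 1)) = real (l i) * wt y k l"
    proof -
      have r: "(\<Prod>j\<in>{1..k}-{i}. y j ^ m j / fact (m j)) = (\<Prod>j\<in>{1..k}-{i}. y j ^ l j / fact (l j))"
        by (rule prod.cong) (auto simp: m_def)
      have li: "l i = Suc (m i)" using lT by (simp add: m_def)
      have fs: "real (Suc a) * (z ^ Suc a / fact (Suc a)) = z * (z ^ a / fact a)" for a and z :: real
      proof -
        have f: "fact (Suc a) = real (Suc a) * (fact a :: real)" by (rule fact_Suc)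
        have p: "z ^ Suc a = z * z ^ a" by simp
        have "real (Suc a) * (z ^ Suc a / fact (Suc a)) = (real (Suc a) * (z * z ^ a)) / (real (Suc a) * fact a)"
          by (simp only: f p) simp
        also have "\<dots> = z * z ^ a / fact a"
          by (rule mult_divide_mult_cancel_left) simp
        finally show ?thesis by simp
      qed
      have "real (l i) * (y i ^ l i / fact (l i)) = y i * (y i ^ m i / fact (m i))"
        unfolding li by (rule fs)
      note eq = this
      define R where "R = (\<Prod>j\<in>{1..k}-{i}. y j ^ l j / fact (l j))"
      have A: "wt y k m = y i ^ m i / fact (m i) * R" using wt_split[OF i, of y m] r by (simp add: R_def)
      have B: "wt y k l = y i ^ l i / fact (l i) * R" using wt_split[OF i, of y l] by (simp add: R_def)
      have "y i * wt y k m = real (l i) * wt y k l"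
        unfolding A B using eq by (metis mult.assoc)
      then show ?thesis by (simp only: m_def)
    qed
  next
    fix m assume m: "m \<in> T'"
    show "(m(i := m i + 1))(i := (m(i := m i + 1)) i - 1) = m" by auto
    have mT: "\<forall>j. j \<notin> {1..k - i} \<longrightarrow> m j = 0" "(\<Sum>j=1..k - i. j * m j) = k - i"
      using m by (auto simp: T'_def partition_tuples_def)
    have msupp: "\<forall>j. j \<notin> {1..k} \<longrightarrow> m j = 0" using mT by auto
    define l where "l = m(i := m i + 1)"
    have ms: "(\<Sum>j=1..k. j * m j) = k - i" using wsum_ext[OF mT(1), of k] mT by simp
    have rest: "(\<Sum>j\<in>{1..k}-{i}. j * l j) = (\<Sum>j\<in>{1..k}-{i}. j * m j)"
      by (rule sum.cong) (auto simp: l_def)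
    have a1: "(\<Sum>j=1..k. j * l j) = i * l i + (\<Sum>j\<in>{1..k}-{i}. j * m j)"
      using wsum_split[OF i, of l] rest by simp
    have a2: "k - i = i * m i + (\<Sum>j\<in>{1..k}-{i}. j * m j)" using wsum_split[OF i, of m] ms by simp
    have a3: "i * l i = i * m i + i" by (simp add: l_def)
    have "i \<le> k" using i by simp
    then have "(\<Sum>j=1..k. j * l j) = k" using a1 a2 a3 by linarith
    moreover have "\<forall>j. j \<notin> {1..k} \<longrightarrow> l j = 0" using msupp i by (auto simp: l_def)
    ultimately have "l \<in> partition_tuples k" by (simp add: partition_tuples_def)
    moreover have "l i > 0" by (simp add: l_def)
    ultimately show "m(i := m i + 1) \<in> S" by (simp add: S_def T_def l_def)
  qed
  also have "\<dots> = y i * pw y (k - i)"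
  proof -
    have "(\<Sum>m\<in>T'. wt y k m) = (\<Sum>m\<in>T'. wt y (k - i) m)"
      by (rule sum.cong[OF refl]) (rule wt_ext, auto simp: T'_def partition_tuples_def)
    then show ?thesis by (simp add: pw_def T'_def sum_distrib_left[symmetric])
  qed
  finally show ?thesis by (simp add: T_def)
qed

lemma pw_rec:
  assumes "k \<ge> 1"
  shows "real k * pw y k = (\<Sum>i=1..k. real i * y i * pw y (k - i))"
proof -
  define T where "T = partition_tuples k"
  have "real k * pw y k = (\<Sum>l\<in>T. real k * wt y k l)" unfolding pw_def T_def by (rule sum_distrib_left)
  also have "\<dots> = (\<Sum>l\<in>T. (\<Sum>i=1..k. real i * real (l i)) * wt y k l)"
  proof (rule sum.cong[OF refl])
    fix l assume "l \<in> T"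
    then have "(\<Sum>i=1..k. i * l i) = k" by (simp add: T_def partition_tuples_def)
    then have "real (\<Sum>i=1..k. i * l i) = real k" by simp
    then have "(\<Sum>i=1..k. real i * real (l i)) = real k" by (simp add: of_nat_sum)
    then show "real k * wt y k l = (\<Sum>i=1..k. real i * real (l i)) * wt y k l" by simp
  qed
  also have "\<dots> = (\<Sum>i=1..k. real i * (\<Sum>l\<in>T. real (l i) * wt y k l))"
  proof -
    have "(\<Sum>l\<in>T. (\<Sum>i=1..k. real i * real (l i)) * wt y k l)
        = (\<Sum>l\<in>T. \<Sum>i=1..k. real i * (real (l i) * wt y k l))"
      by (rule sum.cong[OF refl]) (simp add: sum_distrib_right mult.assoc)
    also have "\<dots> = (\<Sum>i=1..k. \<Sum>l\<in>T. real i * (real (l i) * wt y k l))"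
      by (rule sum.swap)
    also have "\<dots> = (\<Sum>i=1..k. real i * (\<Sum>l\<in>T. real (l i) * wt y k l))"
      by (rule sum.cong[OF refl]) (rule sum_distrib_left[symmetric])
    finally show ?thesis .
  qed
  also have "\<dots> = (\<Sum>i=1..k. real i * y i * pw y (k - i))"
    by (rule sum.cong[OF refl]) (simp add: T_def pw_inner)
  finally show ?thesis .
qed



lemma coeff_pderiv_iter: "Polynomial.coeff ((pderiv ^^ k) r) 0 = fact k * Polynomial.coeff r k"
proof (induction k arbitrary: r)
  case 0 then show ?case by simp
next
  case (Suc k)
  have "(pderiv ^^ Suc k) r = (pderiv ^^ k) (pderiv r)" by (simp add: funpow_Suc_right del: funpow.simps)
  then have "Polynomial.coeff ((pderiv ^^ Suc k) r) 0 = fact k * Polynomial.coeff (pderiv r) k"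
    using Suc by simp
  also have "\<dots> = fact (Suc k) * Polynomial.coeff r (Suc k)" by (simp add: coeff_pderiv algebra_simps)
  finally show ?case .
qed

lemma pderiv_iter_pcompose: "(pderiv ^^ k) (pcompose (p::complex poly) [:1,1:]) = pcompose ((pderiv ^^ k) p) [:(1::complex),1:]"
proof (induction k)
  case 0 then show ?case by simp
next
  case (Suc k)
  have d: "pderiv [:(1::complex), 1:] = 1" by (simp add: pderiv_pCons)
  show ?case using Suc by (simp add: pderiv_pcompose d)
qed

lemma taylor1: "poly ((pderiv ^^ k) (p::complex poly)) 1 = fact k * Polynomial.coeff (pcompose p [:1,1:]) (k::nat)"
proof -
  have "poly ((pderiv ^^ k) p) 1 = poly (pcompose ((pderiv ^^ k) p) [:(1::complex),1:]) 0"
    by (simp add: poly_pcompose)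
  also have "\<dots> = Polynomial.coeff ((pderiv ^^ k) (pcompose p [:1,1:])) 0"
    by (simp add: pderiv_iter_pcompose poly_0_coeff_0)
  also have "\<dots> = fact k * Polynomial.coeff (pcompose p [:1,1:]) k" by (rule coeff_pderiv_iter)
  finally show ?thesis .
qed

lemma J_bounds:
  assumes "n > 0"
  shows "0 \<le> jordan_totient r n \<and> jordan_totient r n \<le> real n ^ r"
proof -
  have f: "0 \<le> 1 - 1 / real p ^ r \<and> 1 - 1 / real p ^ r \<le> 1" if "p \<in> prime_factors n" for p
  proof -
    have "p \<ge> 1" using that by (metis in_prime_factors_imp_prime prime_ge_1_nat)
    then have "real p ^ r \<ge> 1" by simp
    then have "1 / real p ^ r \<le> 1" by (simp add: divide_le_eq)
    moreover have "0 \<le> 1 / real p ^ r" by simp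
    ultimately show ?thesis by linarith
  qed
  have "0 \<le> (\<Prod>p\<in>prime_factors n. 1 - 1 / real p ^ r)" using f by (intro prod_nonneg) auto
  moreover have "(\<Prod>p\<in>prime_factors n. 1 - 1 / real p ^ r) \<le> 1" using f by (intro prod_le_1) auto
  ultimately show ?thesis unfolding jordan_totient_def
    by (simp add: mult_left_le)
qed

lemma pw_bound:
  fixes y c :: "nat \<Rightarrow> real" and x :: real
  assumes "\<And>i. \<bar>y i\<bar> \<le> c i * x ^ i" "\<And>i. c i \<ge> 0" "x \<ge> 0"
  shows "\<bar>pw y m\<bar> \<le> pw c m * x ^ m"
proof -
  have "\<bar>pw y m\<bar> \<le> (\<Sum>l\<in>partition_tuples m. \<bar>wt y m l\<bar>)" unfolding pw_def by (rule sum_abs)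
  also have "\<dots> \<le> (\<Sum>l\<in>partition_tuples m. wt c m l * x ^ m)"
  proof (rule sum_mono)
    fix l assume l: "l \<in> partition_tuples m"
    have "\<bar>wt y m l\<bar> = (\<Prod>j=1..m. \<bar>y j\<bar> ^ l j / fact (l j))"
      unfolding wt_def abs_prod by (simp add: power_abs)
    also have "\<dots> \<le> (\<Prod>j=1..m. (c j * x ^ j) ^ l j / fact (l j))"
      by (intro prod_mono conjI divide_right_mono power_mono assms) auto
    also have "\<dots> = (\<Prod>j=1..m. c j ^ l j / fact (l j)) * (\<Prod>j=1..m. x ^ (j * l j))"
      by (simp add: prod.distrib[symmetric] power_mult_distrib power_mult)
    also have "(\<Prod>j=1..m. x ^ (j * l j)) = x ^ m"
      using l by (simp add: power_sum[symmetric] partition_tuples_def)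
    finally show "\<bar>wt y m l\<bar> \<le> wt c m l * x ^ m" by (simp add: wt_def)
  qed
  also have "\<dots> = pw c m * x ^ m" by (simp add: pw_def sum_distrib_right)
  finally show ?thesis .
qed



lemma aux_field: "x \<noteq> 0 \<Longrightarrow> f \<noteq> 0 \<Longrightarrow> x * (B / (f * x) * J) = B * J / (f::real)"
  by (simp add: field_simps)

definition yv :: "nat \<Rightarrow> nat \<Rightarrow> real" where
  "yv n i = (-1) ^ i * bernoulli_num i / (fact i * real i) * jordan_totient i n"

definition sY :: "nat \<Rightarrow> nat \<Rightarrow> complex" where
  "sY m i = ((fps_exp 1 - 1) ^ i) $ m"

lemma qeq:
  "(if i = 0 then jordan_totient 1 n else 0) + bernoulli_num (Suc i) * jordan_totient (Suc i) n / fact (Suc i)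
   = real (Suc i) * yv n (Suc i)"
proof (cases "i = 0")
  case True
  have "bernoulli_num (Suc 0) = -1/2" using bern1 by simp
  then show ?thesis using True by (simp add: yv_def)
next
  case False
  show ?thesis
  proof (cases "even i")
    case True
    then have "odd (Suc i)" "Suc i \<ge> 3" using False by (auto elim: evenE)
    then have "bernoulli_num (Suc i) = 0" by (rule bern_odd)
    then show ?thesis using False by (simp add: yv_def)
  next
    case odd: False
    then have "(-1::real) ^ Suc i = 1" by simp
    then have "real (Suc i) * yv n (Suc i) = real (Suc i) * (bernoulli_num (Suc i) / (fact (Suc i) * real (Suc i)) * jordan_totient (Suc i) n)"
      unfolding yv_def by (simp only: mult_1)
    also have "\<dots> = bernoulli_num (Suc i) * jordan_totient (Suc i) n / fact (Suc i)"
      by (rule aux_field) auto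
    finally show ?thesis using False by simp
  qed
qed

lemma exact:
  assumes n: "n > 1"
  shows "poly (cyclotomic_poly n) 1 \<noteq> 0"
    and "(\<Sum>i=0..m. Polynomial.coeff (pcompose (cyclotomic_poly n) [:1,1:]) i * sY m i)
          = poly (cyclotomic_poly n) 1 * of_real (pw (yv n) m)"
proof -
  define Jn where "Jn = {j. 1 \<le> j \<and> j \<le> n \<and> coprime j n}"
  define c where "c j = cis (2 * pi * real j / real n)" for j
  define E where "E = fps_exp (1::complex)"
  define Phi1 where "Phi1 = poly (cyclotomic_poly n) 1"
  have finJ: "finite Jn" unfolding Jn_def by (rule finite_subset[of _ "{1..n}"]) auto
  have cne: "c j \<noteq> 1" if "j \<in> Jn" for j
  proof -
    have "j \<noteq> n" using that n by (auto simp: Jn_def)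
    then have "0 < j" "j < n" using that by (auto simp: Jn_def)
    then show ?thesis using rt_ne1 by (simp add: c_def rt_def)
  qed
  have cy: "cyclotomic_poly n = (\<Prod>j\<in>Jn. [:- c j, 1:])"
    by (simp add: cyclotomic_poly_def Jn_def c_def)
  have P1: "Phi1 = (\<Prod>j\<in>Jn. 1 - c j)" by (simp add: Phi1_def cy poly_prod)
  show P1nz: "poly (cyclotomic_poly n) 1 \<noteq> 0"
    using cne finJ by (simp add: Phi1_def[symmetric] P1)
  then have P1nz': "Phi1 \<noteq> 0" by (simp add: Phi1_def)
  define Bt where "Bt = ev (cyclotomic_poly n)"
  have Bt: "Bt = (\<Prod>j\<in>Jn. E - fps_const (c j))" by (simp add: Bt_def cy ev_prod ev_lin E_def)
  have Btn: "Bt $ m = (\<Sum>i=0..m. Polynomial.coeff (pcompose (cyclotomic_poly n) [:1,1:]) i * sY m i)" for m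
    by (simp add: Bt_def ev_nth sY_def)
  have Bt0: "Bt $ 0 = Phi1" by (simp add: Bt prod_nth0 P1 E_def)
  have nz: "(E - fps_const (c j)) $ 0 \<noteq> 0" if "j \<in> Jn" for j using cne[OF that] by (simp add: E_def)
  define G where "G = (\<Sum>j\<in>Jn. E * inverse (E - fps_const (c j)))"
  have dB: "fps_deriv Bt = G * Bt"
  proof -
    have "fps_deriv Bt = (\<Sum>j\<in>Jn. fps_deriv (E - fps_const (c j)) * inverse (E - fps_const (c j))) * Bt"
      unfolding Bt apply (rule prod_logderiv) apply (rule finJ) using nz by blast
    then show ?thesis by (simp add: G_def E_def)
  qed
  have Gn: "G $ i = of_real (real (Suc i) * yv n (Suc i))" for i
  proof -
    have "G $ i = (\<Sum>j\<in>Jn. gam (c j) i)" by (simp add: G_def fps_sum_nth gam_def E_def)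
    also have "\<dots> = (if i = 0 then of_real (jordan_totient 1 n) else 0) +
      of_real (bernoulli_num (Suc i)) * of_real (jordan_totient (Suc i) n) / fact (Suc i)"
      using g_formula[OF n, of i] by (simp add: Jn_def c_def)
    also have "\<dots> = of_real ((if i = 0 then jordan_totient 1 n else 0) + bernoulli_num (Suc i) * jordan_totient (Suc i) n / fact (Suc i))"
      by simp
    also have "\<dots> = of_real (real (Suc i) * yv n (Suc i))" by (simp only: qeq)
    finally show ?thesis .
  qed
  have rec: "of_nat (Suc m) * Bt $ Suc m = (\<Sum>i=0..m. G $ i * Bt $ (m - i))" for m
  proof -
    have "fps_deriv Bt $ m = (G * Bt) $ m" using dB by simp
    then show ?thesis by (simp add: fps_mult_nth)
  qed
  have main: "Bt $ m = Phi1 * of_real (pw (yv n) m)" for m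
  proof (induction m rule: less_induct)
    case (less m)
    show ?case
    proof (cases m)
      case 0 then show ?thesis by (simp add: Bt0 pw0)
    next
      case (Suc m')
      have "of_nat (Suc m') * Bt $ Suc m' = (\<Sum>i=0..m'. G $ i * Bt $ (m' - i))" by (rule rec)
      also have "\<dots> = (\<Sum>i=0..m'. Phi1 * of_real (real (Suc i) * yv n (Suc i) * pw (yv n) (Suc m' - Suc i)))"
      proof (rule sum.cong[OF refl])
        fix i assume "i \<in> {0..m'}"
        then have "m' - i < m" using Suc by simp
        then have "Bt $ (m' - i) = Phi1 * of_real (pw (yv n) (m' - i))" by (rule less.IH)
        then show "G $ i * Bt $ (m' - i) = Phi1 * of_real (real (Suc i) * yv n (Suc i) * pw (yv n) (Suc m' - Suc i))"
          by (simp add: Gn)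
      qed
      also have "\<dots> = Phi1 * of_real (\<Sum>r=Suc 0..Suc m'. real r * yv n r * pw (yv n) (Suc m' - r))"
        by (simp only: sum.shift_bounds_cl_Suc_ivl of_real_sum sum_distrib_left)
      also have "(\<Sum>r=Suc 0..Suc m'. real r * yv n r * pw (yv n) (Suc m' - r)) = real (Suc m') * pw (yv n) (Suc m')"
        using pw_rec[of "Suc m'" "yv n"] by simp
      finally have "of_nat (Suc m') * Bt $ Suc m' = of_nat (Suc m') * (Phi1 * of_real (pw (yv n) (Suc m')))"
        by simp
      then show ?thesis using Suc by (simp del: of_nat_Suc)
    qed
  qed
  show "(\<Sum>i=0..m. Polynomial.coeff (pcompose (cyclotomic_poly n) [:1,1:]) i * sY m i)
          = poly (cyclotomic_poly n) 1 * of_real (pw (yv n) m)"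
    using main[of m] Btn[of m] by (simp add: Phi1_def)
qed



definition aa :: "nat \<Rightarrow> nat \<Rightarrow> complex" where
  "aa n m = Polynomial.coeff (pcompose (cyclotomic_poly n) [:1,1:]) m / poly (cyclotomic_poly n) 1"

definition cb :: "nat \<Rightarrow> real" where
  "cb i = \<bar>bernoulli_num i\<bar> / (fact i * real i)"

lemma sY_diag: "sY m m = 1" and sY_low: "m < i \<Longrightarrow> sY m i = 0"
  using Ypow_nth[of m m] Ypow_nth[of i m] by (auto simp: sY_def)

lemma aa_rec:
  assumes "n > 1"
  shows "aa n m = of_real (pw (yv n) m) - (\<Sum>i<m. aa n i * sY m i)"
proof -
  have nz: "poly (cyclotomic_poly n) 1 \<noteq> 0" by (rule exact(1)[OF assms])
  have "(\<Sum>i=0..m. aa n i * sY m i) = of_real (pw (yv n) m)"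
    using exact(2)[OF assms, of m] nz by (simp add: aa_def sum_divide_distrib[symmetric] field_simps)
  moreover have "(\<Sum>i=0..m. aa n i * sY m i) = (\<Sum>i<m. aa n i * sY m i) + aa n m"
    by (simp add: atLeast0AtMost lessThan_Suc_atMost[symmetric] sY_diag)
  ultimately show ?thesis by (simp add: algebra_simps)
qed

lemma yv_bound: "n > 0 \<Longrightarrow> \<bar>yv n i\<bar> \<le> cb i * real n ^ i"
proof -
  assume n: "n > 0"
  have "\<bar>yv n i\<bar> = cb i * \<bar>jordan_totient i n\<bar>"
    by (simp add: yv_def cb_def abs_mult)
  also have "\<dots> \<le> cb i * real n ^ i"
    using J_bounds[OF n, of i] by (intro mult_left_mono) (auto simp: cb_def)
  finally show ?thesis .
qed

lemma pw_yv_bound: "n > 0 \<Longrightarrow> \<bar>pw (yv n) m\<bar> \<le> pw cb m * real n ^ m"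
  apply (rule pw_bound) apply (rule yv_bound, assumption) apply (simp add: cb_def) apply simp done

lemma aa_bound: "\<exists>A. \<forall>n>1. cmod (aa n m) \<le> A * real n ^ m"
proof (induction m rule: less_induct)
  case (less m)
  then have "\<forall>i\<in>{..<m}. \<exists>A. \<forall>n>1. cmod (aa n i) \<le> A * real n ^ i" by auto
  from bchoice[OF this] obtain A where A0: "\<forall>i\<in>{..<m}. \<forall>n>1. cmod (aa n i) \<le> A i * real n ^ i" ..
  have A: "\<And>i n. i < m \<Longrightarrow> n > 1 \<Longrightarrow> cmod (aa n i) \<le> A i * real n ^ i" using A0 by auto
  define K where "K = pw cb m + (\<Sum>i<m. \<bar>A i\<bar> * cmod (sY m i))"
  show ?case
  proof (intro exI allI impI)
    fix n :: nat assume n: "n > 1"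
    have "cmod (aa n m) \<le> cmod (of_real (pw (yv n) m) :: complex) + cmod (\<Sum>i<m. aa n i * sY m i)"
      unfolding aa_rec[OF n, of m] by (rule norm_triangle_ineq4)
    also have "cmod (of_real (pw (yv n) m) :: complex) \<le> pw cb m * real n ^ m"
      using pw_yv_bound[of n m] n by simp
    also have "cmod (\<Sum>i<m. aa n i * sY m i) \<le> (\<Sum>i<m. \<bar>A i\<bar> * cmod (sY m i) * real n ^ m)"
    proof -
      have "cmod (\<Sum>i<m. aa n i * sY m i) \<le> (\<Sum>i<m. cmod (aa n i) * cmod (sY m i))"
        by (rule order_trans[OF norm_sum]) (simp add: norm_mult)
      also have "\<dots> \<le> (\<Sum>i<m. \<bar>A i\<bar> * cmod (sY m i) * real n ^ m)"
      proof (rule sum_mono)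
        fix i assume i: "i \<in> {..<m}"
        have "cmod (aa n i) \<le> A i * real n ^ i" using A i n by auto
        also have "\<dots> \<le> \<bar>A i\<bar> * real n ^ i" by (intro mult_right_mono) auto
        also have "\<dots> \<le> \<bar>A i\<bar> * real n ^ m"
          using i n by (intro mult_left_mono power_increasing) auto
        finally have "cmod (aa n i) * cmod (sY m i) \<le> \<bar>A i\<bar> * real n ^ m * cmod (sY m i)"
          by (rule mult_right_mono) simp
        then show "cmod (aa n i) * cmod (sY m i) \<le> \<bar>A i\<bar> * cmod (sY m i) * real n ^ m"
          by (simp only: mult_ac)
      qed
      finally show ?thesis .
    qed
    finally show "cmod (aa n m) \<le> K * real n ^ m"
      by (simp add: K_def distrib_right sum_distrib_right)
  qed
qed

lemma diff_bound:
  assumes "k \<ge> 1"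
  shows "\<exists>K. \<forall>n>1. cmod (aa n k - of_real (pw (yv n) k)) \<le> K * real n ^ (k - 1)"
proof -
  have "\<forall>i\<in>{..<k}. \<exists>A. \<forall>n>1. cmod (aa n i) \<le> A * real n ^ i" using aa_bound by auto
  from bchoice[OF this] obtain A where A0: "\<forall>i\<in>{..<k}. \<forall>n>1. cmod (aa n i) \<le> A i * real n ^ i" ..
  have A: "\<And>i n. i < k \<Longrightarrow> n > 1 \<Longrightarrow> cmod (aa n i) \<le> A i * real n ^ i" using A0 by auto
  define K where "K = (\<Sum>i<k. \<bar>A i\<bar> * cmod (sY k i))"
  show ?thesis
  proof (intro exI allI impI)
    fix n :: nat assume n: "n > 1"
    have "cmod (aa n k - of_real (pw (yv n) k)) = cmod (\<Sum>i<k. aa n i * sY k i)"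
      unfolding aa_rec[OF n, of k] by (simp add: norm_minus_commute)
    also have "\<dots> \<le> (\<Sum>i<k. cmod (aa n i) * cmod (sY k i))"
      by (rule order_trans[OF norm_sum]) (simp add: norm_mult)
    also have "\<dots> \<le> (\<Sum>i<k. \<bar>A i\<bar> * cmod (sY k i) * real n ^ (k - 1))"
    proof (rule sum_mono)
      fix i assume i: "i \<in> {..<k}"
      have "cmod (aa n i) \<le> A i * real n ^ i" using A i n by auto
      also have "\<dots> \<le> \<bar>A i\<bar> * real n ^ i" by (intro mult_right_mono) auto
      also have "\<dots> \<le> \<bar>A i\<bar> * real n ^ (k - 1)"
        using i n by (intro mult_left_mono power_increasing) auto
      finally have "cmod (aa n i) * cmod (sY k i) \<le> \<bar>A i\<bar> * real n ^ (k - 1) * cmod (sY k i)"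
        by (rule mult_right_mono) simp
      then show "cmod (aa n i) * cmod (sY k i) \<le> \<bar>A i\<bar> * cmod (sY k i) * real n ^ (k - 1)"
        by (simp only: mult_ac)
    qed
    also have "\<dots> = K * real n ^ (k - 1)" by (simp add: K_def sum_distrib_right)
    finally show "cmod (aa n k - of_real (pw (yv n) k)) \<le> K * real n ^ (k - 1)" .
  qed
qed

lemma pow_factor: fixes a b c d g :: real
  shows "(a * (b / c) * d) ^ l / g = a ^ l / g * (b / c) ^ l * d ^ l"
  by (simp only: power_mult_distrib divide_inverse mult_ac)

lemma main_term_eq:
  "(\<Sum>l\<in>partition_tuples k.
       (\<Prod>i=1..k. (-1) ^ (i * l i) / fact (l i)
           * (bernoulli_num i / (fact i * real i)) ^ l i
           * jordan_totient i n ^ l i)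
       / real (totient n) ^ k) = pw (yv n) k / real (totient n) ^ k"
proof -
  have "(\<Prod>i=1..k. (-1) ^ (i * l i) / fact (l i)
           * (bernoulli_num i / (fact i * real i)) ^ l i
           * jordan_totient i n ^ l i) = wt (yv n) k l" for l
    unfolding wt_def
  proof (rule prod.cong[OF refl])
    fix i
    have "yv n i ^ l i / fact (l i) = ((-1) ^ i) ^ l i / fact (l i) * (bernoulli_num i / (fact i * real i)) ^ l i * jordan_totient i n ^ l i"
      unfolding yv_def by (simp only: mult.assoc[symmetric] times_divide_eq_right[symmetric] pow_factor)
    then show "(-1) ^ (i * l i) / fact (l i) * (bernoulli_num i / (fact i * real i)) ^ l i * jordan_totient i n ^ l i
       = yv n i ^ l i / fact (l i)" by (simp add: power_mult)
  qed
  then show ?thesis by (simp add: pw_def sum_divide_distrib)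
qed

theorem mainTheorem10:
  fixes k :: nat
  assumes "k \<ge> 1"
  shows "\<exists>C::real. \<forall>n::nat. n > 1 \<longrightarrow>
    cmod (poly ((pderiv ^^ k) (cyclotomic_poly n)) 1
            / (of_nat (totient n) ^ k * poly (cyclotomic_poly n) 1)
          - complex_of_real
              (fact k * (\<Sum>l\<in>partition_tuples k.
                 (\<Prod>i=1..k. (-1) ^ (i * l i) / fact (l i)
                     * (bernoulli_num i / (fact i * real i)) ^ l i
                     * jordan_totient i n ^ l i)
                 / real (totient n) ^ k)))
      \<le> C * real n ^ (k - 1) / real (totient n) ^ k"
proof -
  obtain K where K: "\<And>n. n > 1 \<Longrightarrow> cmod (aa n k - of_real (pw (yv n) k)) \<le> K * real n ^ (k - 1)"
    using diff_bound[OF assms] by blast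
  show ?thesis
  proof (intro exI allI impI)
    fix n :: nat assume n: "n > 1"
    define Phi1 where "Phi1 = poly (cyclotomic_poly n) 1"
    define t where "t = real (totient n)"
    have nz: "Phi1 \<noteq> 0" using exact(1)[OF n] by (simp add: Phi1_def)
    have t0: "t > 0" using n by (simp add: t_def)
    have lhs: "poly ((pderiv ^^ k) (cyclotomic_poly n)) 1 = fact k * Phi1 * aa n k"
      using nz by (simp add: taylor1 aa_def Phi1_def)
    have "poly ((pderiv ^^ k) (cyclotomic_poly n)) 1 / (of_nat (totient n) ^ k * Phi1)
          - complex_of_real (fact k * (pw (yv n) k / t ^ k))
        = fact k * (aa n k - of_real (pw (yv n) k)) / of_real t ^ k"
      using nz t0 unfolding lhs by (simp add: t_def field_simps)
    then have "cmod (poly ((pderiv ^^ k) (cyclotomic_poly n)) 1 / (of_nat (totient n) ^ k * Phi1)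
          - complex_of_real (fact k * (pw (yv n) k / t ^ k)))
        = fact k * cmod (aa n k - of_real (pw (yv n) k)) / t ^ k"
      using t0 by (simp add: norm_mult norm_divide norm_power norm_fact)
    also have "\<dots> \<le> fact k * (K * real n ^ (k - 1)) / t ^ k"
      using K[OF n] t0 by (intro divide_right_mono mult_left_mono) auto
    also have "\<dots> = (fact k * K) * real n ^ (k - 1) / t ^ k" by simp
    finally have calc: "cmod (poly ((pderiv ^^ k) (cyclotomic_poly n)) 1 / (of_nat (totient n) ^ k * Phi1)
          - complex_of_real (fact k * (pw (yv n) k / t ^ k))) \<le> (fact k * K) * real n ^ (k - 1) / t ^ k" .
    show "cmod (poly ((pderiv ^^ k) (cyclotomic_poly n)) 1
            / (of_nat (totient n) ^ k * poly (cyclotomic_poly n) 1)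
          - complex_of_real
              (fact k * (\<Sum>l\<in>partition_tuples k.
                 (\<Prod>i=1..k. (-1) ^ (i * l i) / fact (l i)
                     * (bernoulli_num i / (fact i * real i)) ^ l i
                     * jordan_totient i n ^ l i)
                 / real (totient n) ^ k)))
      \<le> (fact k * K) * real n ^ (k - 1) / real (totient n) ^ k"
      using calc by (simp only: main_term_eq Phi1_def t_def)
  qed
qed


end
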